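(* Let $(E,\phi)$ be a $t$-finite $t$-module of dimension $d$ over $K$ and $D\in\mathrm{Mat}_{d\times d}(K\{\tau\})$ the matrix representing $\phi_t$ in a fixed coordinate system. Then there exists $n\ge1$ such that, with $s$ the maximal $\tau$-degree of all entries of $D,D^2,\dots,D^n$, the block row matrix $(\sigma^sD,\sigma^sD^2,\dots,\sigma^sD^n)\in\mathrm{Mat}_{d\times nd}(K\{\sigma\})$ has rank $d$ modulo $\sigma^s$.
   Context: $\mathbb{F}_q$ finite field, $K$ perfect field containing $\mathbb{F}_q$, $\ell:\mathbb{F}_q[t]\to K$ an $\mathbb{F}_q$-algebra homomorphism. $K\{\tau\}$: skew polynomials with $\tau\alpha=\alpha^q\tau$, identified with $\mathbb{F}_q$-linear endomorphisms of $\mathbb{G}_a$. $K(\!(\sigma)\!)$: skew Laurent series with $\sigma\alpha=\alpha^{1/q}\sigma$, valuation ring $K[\![\sigma]\!]$, containing $K\{\sigma\}$; $K\{\tau\}\subseteq K(\!(\sigma)\!)$ via $\tau\mapsto\sigma^{-1}$. A $t$-module $(E,\phi)$ of dimension $d$: $\mathbb{F}_q$-vector space scheme $E\cong\mathbb{G}_a^d$ over $K$ with $\mathbb{F}_q$-algebra homomorphism $\phi:\mathbb{F}_q[t]\to\mathrm{End}_{\mathrm{grp},\mathbb{F}_q}(E)$, $d\phi_a-\ell(a)$ nilpotent on $\mathrm{Lie}(E)$; in a fixed coordinate system $\phi_t$ is a matrix $D$ over $K\{\tau\}$. $E$ is $t$-finite if its dual $t$-motive $\mathrm{Hom}_{\mathrm{grp},\mathbb{F}_q}(\mathbb{G}_a,E)$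 ($K\{\tau\}$ acting by pre-composition, $t$ by post-composition with $\phi_t$) is finitely generated as $K[t]$-module. Rank modulo $\sigma^s$: a matrix $B$ over $K[\![\sigma]\!]$ is diagonalized by elementary row and column operations to non-zero diagonal entries $\sigma^{\nu_1},\dots,\sigma^{\nu_n}$; it has rank $r$ modulo $\sigma^s$ if $\#\{i:\nu_i<s\}=r$. *)

theory Defs
  imports "HOL-Computational_Algebra.Polynomial"
begin

section \<open>Skew polynomials K{tau} (tau a = a^q tau), stored as 'k poly\<close>

definition frob :: "nat \<Rightarrow> 'k::field \<Rightarrow> 'k" where
  "frob q x = x ^ q"

text \<open>inverse Frobenius a \<mapsto> a^(1/q) (K perfect, so frob q is bijective)\<close>
definition frob_inv :: "nat \<Rightarrow> 'k::field \<Rightarrow> 'k" where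
  "frob_inv q = inv (frob q)"

text \<open>product in K{tau}: (a tau^i)(b tau^j) = a b^(q^i) tau^(i+j)\<close>
definition tmul :: "nat \<Rightarrow> 'k::field poly \<Rightarrow> 'k poly \<Rightarrow> 'k poly" where
  "tmul q f g = (\<Sum>i\<le>degree f. \<Sum>j\<le>degree g.
      monom (coeff f i * (frob q ^^ i) (coeff g j)) (i + j))"

text \<open>d x d matrices over K{tau} as functions nat \<Rightarrow> nat \<Rightarrow> 'k poly (indices < d)\<close>
definition tmatmul :: "nat \<Rightarrow> nat \<Rightarrow> (nat \<Rightarrow> nat \<Rightarrow> 'k::field poly)
    \<Rightarrow> (nat \<Rightarrow> nat \<Rightarrow> 'k poly) \<Rightarrow> nat \<Rightarrow> nat \<Rightarrow> 'k poly" where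
  "tmatmul q d A B i j = (\<Sum>k<d. tmul q (A i k) (B k j))"

fun tmatpow :: "nat \<Rightarrow> nat \<Rightarrow> (nat \<Rightarrow> nat \<Rightarrow> 'k::field poly) \<Rightarrow> nat
    \<Rightarrow> nat \<Rightarrow> nat \<Rightarrow> 'k poly" where
  "tmatpow q d D 0 = (\<lambda>i j. if i = j then 1 else 0)"
| "tmatpow q d D (Suc k) = tmatmul q d D (tmatpow q d D k)"

definition tmatvec :: "nat \<Rightarrow> nat \<Rightarrow> (nat \<Rightarrow> nat \<Rightarrow> 'k::field poly)
    \<Rightarrow> (nat \<Rightarrow> 'k poly) \<Rightarrow> nat \<Rightarrow> 'k poly" where
  "tmatvec q d A v i = (\<Sum>k<d. tmul q (A i k) (v k))"

definition kmatmul :: "nat \<Rightarrow> (nat \<Rightarrow> nat \<Rightarrow> 'k::field) \<Rightarrow> (nat \<Rightarrow> nat \<Rightarrow> 'k)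
    \<Rightarrow> nat \<Rightarrow> nat \<Rightarrow> 'k" where
  "kmatmul d A B i j = (\<Sum>k<d. A i k * B k j)"

fun kmatpow :: "nat \<Rightarrow> (nat \<Rightarrow> nat \<Rightarrow> 'k::field) \<Rightarrow> nat \<Rightarrow> nat \<Rightarrow> nat \<Rightarrow> 'k" where
  "kmatpow d A 0 = (\<lambda>i j. if i = j then 1 else 0)"
| "kmatpow d A (Suc k) = kmatmul d A (kmatpow d A k)"

definition kmat_nilpotent :: "nat \<Rightarrow> (nat \<Rightarrow> nat \<Rightarrow> 'k::field) \<Rightarrow> bool" where
  "kmat_nilpotent d A \<longleftrightarrow> (\<exists>N. \<forall>i<d. \<forall>j<d. kmatpow d A N i j = 0)"

text \<open>D represents phi_t of a t-module of dimension d w.r.t. theta = ell(t):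
  d phi_t - theta = (constant term of D) - theta I is nilpotent on Lie(E) = K^d\<close>
definition is_tmodule :: "'k::field \<Rightarrow> nat \<Rightarrow> (nat \<Rightarrow> nat \<Rightarrow> 'k poly) \<Rightarrow> bool" where
  "is_tmodule \<theta> d D \<longleftrightarrow>
     kmat_nilpotent d (\<lambda>i j. coeff (D i j) 0 - (if i = j then \<theta> else 0))"

text \<open>t-finite: the dual t-motive Hom(G_a,E) = K{tau}^d (column vectors m),
  with a \<in> K acting by pre-composition (m \<mapsto> m a) and t by m \<mapsto> D m,
  is finitely generated as K[t]-module.\<close>
definition t_finite :: "nat \<Rightarrow> nat \<Rightarrow> (nat \<Rightarrow> nat \<Rightarrow> 'k::field poly) \<Rightarrow> bool" where
  "t_finite q d D \<longleftrightarrow>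
     (\<exists>r::nat. \<exists>gens :: nat \<Rightarrow> nat \<Rightarrow> 'k poly.
       \<forall>m :: nat \<Rightarrow> 'k poly. \<exists>N::nat. \<exists>c :: nat \<Rightarrow> nat \<Rightarrow> 'k.
         \<forall>i<d. m i = (\<Sum>g<r. \<Sum>j<N.
             tmul q (tmatvec q d (tmatpow q d D j) (gens g) i) [:c g j:]))"

section \<open>Skew power series K[[sigma]] (sigma a = a^(1/q) sigma), as coefficient functions\<close>

definition smul :: "nat \<Rightarrow> (nat \<Rightarrow> 'k::field) \<Rightarrow> (nat \<Rightarrow> 'k) \<Rightarrow> nat \<Rightarrow> 'k" where
  "smul q f g n = (\<Sum>i\<le>n. f i * (frob_inv q ^^ i) (g (n - i)))"

definition sadd :: "(nat \<Rightarrow> 'k::field) \<Rightarrow> (nat \<Rightarrow> 'k) \<Rightarrow> nat \<Rightarrow> 'k" where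
  "sadd f g n = f n + g n"

definition szero :: "nat \<Rightarrow> 'k::field" where
  "szero = (\<lambda>n. 0)"

definition spow :: "nat \<Rightarrow> nat \<Rightarrow> 'k::field" where
  "spow \<nu> = (\<lambda>n. if n = \<nu> then 1 else 0)"

definition sunit :: "nat \<Rightarrow> (nat \<Rightarrow> 'k::field) \<Rightarrow> bool" where
  "sunit q u \<longleftrightarrow> (\<exists>v. smul q u v = spow 0 \<and> smul q v u = spow 0)"

inductive elem_reach :: "nat \<Rightarrow> nat \<Rightarrow> nat \<Rightarrow> (nat \<Rightarrow> nat \<Rightarrow> nat \<Rightarrow> 'k::field)
    \<Rightarrow> (nat \<Rightarrow> nat \<Rightarrow> nat \<Rightarrow> 'k) \<Rightarrow> bool" for q r c M where
  refl: "elem_reach q r c M M"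
| swap_row: "elem_reach q r c M M' \<Longrightarrow> i < r \<Longrightarrow> k < r \<Longrightarrow>
    elem_reach q r c M (\<lambda>a b. if a = i then M' k b else if a = k then M' i b else M' a b)"
| scale_row: "elem_reach q r c M M' \<Longrightarrow> i < r \<Longrightarrow> sunit q u \<Longrightarrow>
    elem_reach q r c M (\<lambda>a b. if a = i then smul q u (M' i b) else M' a b)"
| add_row: "elem_reach q r c M M' \<Longrightarrow> i < r \<Longrightarrow> k < r \<Longrightarrow> i \<noteq> k \<Longrightarrow>
    elem_reach q r c M (\<lambda>a b. if a = i then sadd (M' i b) (smul q x (M' k b)) else M' a b)"
| swap_col: "elem_reach q r c M M' \<Longrightarrow> i < c \<Longrightarrow> k < c \<Longrightarrow>
    elem_reach q r c M (\<lambda>a b. if b = i then M' a k else if b = k then M' a i else M' a b)"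
| scale_col: "elem_reach q r c M M' \<Longrightarrow> i < c \<Longrightarrow> sunit q u \<Longrightarrow>
    elem_reach q r c M (\<lambda>a b. if b = i then smul q (M' a i) u else M' a b)"
| add_col: "elem_reach q r c M M' \<Longrightarrow> i < c \<Longrightarrow> k < c \<Longrightarrow> i \<noteq> k \<Longrightarrow>
    elem_reach q r c M (\<lambda>a b. if b = i then sadd (M' a i) (smul q (M' a k) x) else M' a b)"

definition sdiag_form :: "nat \<Rightarrow> nat \<Rightarrow> (nat \<Rightarrow> nat \<Rightarrow> nat \<Rightarrow> 'k::field) \<Rightarrow> bool" where
  "sdiag_form r c M \<longleftrightarrow>
     (\<forall>a<r. \<forall>b<c. a \<noteq> b \<longrightarrow> M a b = szero) \<and>
     (\<forall>a<min r c. M a a = szero \<or> (\<exists>\<nu>. M a a = spow \<nu>))"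

definition rank_mod_sigma :: "nat \<Rightarrow> nat \<Rightarrow> nat \<Rightarrow> (nat \<Rightarrow> nat \<Rightarrow> nat \<Rightarrow> 'k::field)
    \<Rightarrow> nat \<Rightarrow> nat \<Rightarrow> bool" where
  "rank_mod_sigma q r c B s rk \<longleftrightarrow>
     (\<exists>M. elem_reach q r c B M \<and> sdiag_form r c M \<and>
          rk = card {a. a < min r c \<and> (\<exists>\<nu><s. M a a = spow \<nu>)})"

text \<open>sigma^s f for f \<in> K{tau} of tau-degree \<le> s, via tau = sigma^(-1):
  sigma^s a tau^j = a^(1/q^s) sigma^(s-j)\<close>
definition sigma_shift :: "nat \<Rightarrow> nat \<Rightarrow> 'k::field poly \<Rightarrow> nat \<Rightarrow> 'k" where
  "sigma_shift q s f = (\<lambda>m. if m \<le> s then (frob_inv q ^^ s) (coeff f (s - m)) else 0)"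

text \<open>(sigma^s D, sigma^s D^2, ..., sigma^s D^n), a d x nd matrix\<close>
definition block_row :: "nat \<Rightarrow> nat \<Rightarrow> (nat \<Rightarrow> nat \<Rightarrow> 'k::field poly) \<Rightarrow> nat \<Rightarrow> nat
    \<Rightarrow> nat \<Rightarrow> nat \<Rightarrow> nat \<Rightarrow> 'k" where
  "block_row q d D n s = (\<lambda>i col. sigma_shift q s (tmatpow q d D (col div d + 1) i (col mod d)))"

definition max_tau_deg :: "nat \<Rightarrow> nat \<Rightarrow> (nat \<Rightarrow> nat \<Rightarrow> 'k::field poly) \<Rightarrow> nat \<Rightarrow> nat" where
  "max_tau_deg q d D n = Max ({0} \<union>
     {degree (tmatpow q d D k i j) | k i j. 1 \<le> k \<and> k \<le> n \<and> i < d \<and> j < d})"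

end

theory Submission
  imports Defs "HOL-Computational_Algebra.Primes"
begin

definition mv :: "nat \<Rightarrow> nat \<Rightarrow> (nat \<Rightarrow> nat \<Rightarrow> nat \<Rightarrow> 'k::field) \<Rightarrow> (nat \<Rightarrow> nat \<Rightarrow> 'k) \<Rightarrow> nat \<Rightarrow> nat \<Rightarrow> 'k" where
  "mv q c A x b = (\<lambda>n. \<Sum>col<c. smul q (A b col) (x col) n)"

definition CC :: "nat \<Rightarrow> nat \<Rightarrow> nat \<Rightarrow> nat \<Rightarrow> (nat \<Rightarrow> nat \<Rightarrow> nat \<Rightarrow> 'k::field) \<Rightarrow> bool" where
  "CC q r c m A \<longleftrightarrow> (\<forall>\<kappa>. \<exists>x. \<forall>b<r. \<forall>n\<le>m. mv q c A x b n = (if n = m then \<kappa> b else 0))"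

definition lrsh :: "nat \<Rightarrow> nat \<Rightarrow> nat \<Rightarrow> 'k::field poly \<Rightarrow> nat \<Rightarrow> 'k" where
  "lrsh q s L f = (\<lambda>m. if m \<le> s + L then (frob_inv q ^^ s) (coeff f (s + L - m)) else 0)"

locale skew =
  fixes q :: nat and Fr :: "'k::field \<Rightarrow> 'k"
  assumes Fr_def: "Fr = frob q"
    and q_pos: "q > 0"
    and frob_add0: "\<And>x y::'k. (x+y)^q = x^q + y^q"
    and frob_bij0: "bij (\<lambda>x::'k. x^q)"
begin

abbreviation F :: "'k \<Rightarrow> 'k" where "F \<equiv> frob_inv q"
abbreviation P :: "'k \<Rightarrow> 'k" where "P \<equiv> frob q"

lemma frob_bij: "bij P" using frob_bij0 by (simp add: frob_def[abs_def])

lemma F_P[simp]: "F (P x) = x"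
  unfolding frob_inv_def using frob_bij by (simp add: bij_is_inj)
lemma P_F[simp]: "P (F x) = x"
  unfolding frob_inv_def using frob_bij by (simp add: bij_is_surj surj_f_inv_f)

lemma P_add[simp]: "P (x + y) = P x + P y" by (simp add: frob_def frob_add0)
lemma P_mult[simp]: "P (x * y) = P x * P y" by (simp add: frob_def power_mult_distrib)
lemma P_0[simp]: "P 0 = 0" using q_pos by (simp add: frob_def)
lemma P_1[simp]: "P 1 = 1" by (simp add: frob_def)
lemma P_inj: "P x = P y \<longleftrightarrow> x = y" by (metis F_P)

lemma F_add[simp]: "F (x + y) = F x + F y" by (metis P_add F_P P_F)
lemma F_mult[simp]: "F (x * y) = F x * F y" by (metis P_mult F_P P_F)
lemma F_0[simp]: "F 0 = 0" by (metis P_0 F_P)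
lemma F_1[simp]: "F 1 = 1" by (metis P_1 F_P)
lemma F_neg[simp]: "F (- x) = - F x" by (metis F_add F_0 add.right_inverse add_eq_0_iff)
lemma F_sum: "F (sum g A) = (\<Sum>a\<in>A. F (g a))"
  by (induction A rule: infinite_finite_induct) auto
lemma F_diff[simp]: "F (x - y) = F x - F y" by (metis F_add F_neg diff_conv_add_uminus)
lemma F_eq0[simp]: "F x = 0 \<longleftrightarrow> x = 0" by (metis F_0 P_F)

lemma Fn_add[simp]: "(F^^n) (x + y) = (F^^n) x + (F^^n) y" by (induction n) auto
lemma Fn_mult[simp]: "(F^^n) (x * y) = (F^^n) x * (F^^n) y" by (induction n) auto
lemma Fn_0[simp]: "(F^^n) 0 = 0" by (induction n) auto
lemma Fn_1[simp]: "(F^^n) 1 = 1" by (induction n) auto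
lemma Fn_neg[simp]: "(F^^n) (- x) = - (F^^n) x" by (induction n) auto
lemma Fn_diff[simp]: "(F^^n) (x - y) = (F^^n) x - (F^^n) y" by (induction n) auto
lemma Fn_sum: "(F^^n) (sum g A) = (\<Sum>a\<in>A. (F^^n) (g a))"
  by (induction A rule: infinite_finite_induct) auto
lemma Fn_comp: "(F^^i) ((F^^j) x) = (F^^(i+j)) x" by (simp add: funpow_add)
lemma Pn_add[simp]: "(P^^n) (x + y) = (P^^n) x + (P^^n) y" by (induction n) auto
lemma Pn_mult[simp]: "(P^^n) (x * y) = (P^^n) x * (P^^n) y" by (induction n) auto
lemma Pn_0[simp]: "(P^^n) 0 = 0" by (induction n) auto
lemma Pn_1[simp]: "(P^^n) 1 = 1" by (induction n) auto
lemma Pn_sum: "(P^^n) (sum g A) = (\<Sum>a\<in>A. (P^^n) (g a))"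
  by (induction A rule: infinite_finite_induct) auto
lemma Fn_Pn[simp]: "(F^^n) ((P^^n) x) = x"
proof (induction n arbitrary: x)
  case (Suc n)
  have "(F^^Suc n) ((P^^Suc n) x) = F ((F^^n) ((P^^n) (P x)))"
    by (simp only: funpow_Suc_right funpow.simps(2) comp_def) (simp add: funpow_swap1)
  then show ?case using Suc by simp
qed simp
lemma Pn_Fn[simp]: "(P^^n) ((F^^n) x) = x"
proof (induction n arbitrary: x)
  case (Suc n)
  have "(P^^Suc n) ((F^^Suc n) x) = P ((P^^n) ((F^^n) (F x)))"
    by (simp only: funpow_Suc_right funpow.simps(2) comp_def) (simp add: funpow_swap1)
  then show ?case using Suc by simp
qed simp
lemma Fn_Pa: "a \<le> s \<Longrightarrow> (F^^s) ((P^^a) x) = (F^^(s-a)) x"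
proof -
  assume "a \<le> s"
  then have "(F^^s) = (F^^(s-a)) o (F^^a)" by (simp add: funpow_add[symmetric])
  then show ?thesis by simp
qed
lemma Fn_eq0[simp]: "(F^^n) x = 0 \<longleftrightarrow> x = 0" by (metis Fn_0 Pn_Fn)
lemma Pn_eq0[simp]: "(P^^n) x = 0 \<longleftrightarrow> x = 0" by (metis Pn_0 Fn_Pn)

section \<open>power series\<close>

abbreviation M :: "(nat \<Rightarrow> 'k) \<Rightarrow> (nat \<Rightarrow> 'k) \<Rightarrow> nat \<Rightarrow> 'k" where
  "M \<equiv> smul q"

lemma smul_assoc: "M (M f g) h = M f (M g h)"
proof
  fix n
  define T where "T = (\<lambda>j k l. f j * (F^^j) (g k) * (F^^(j+k)) (h l))"
  have "M (M f g) h n = (\<Sum>i\<le>n. \<Sum>j\<le>i. T j (i-j) (n-i))"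
    by (simp add: smul_def T_def sum_distrib_right Fn_comp add.commute)
  also have "\<dots> = (\<Sum>(j,k)\<in>{(j,k). j+k \<le> n}. T j k (n-j-k))"
    by (subst sum.triangle_reindex_eq) (auto intro!: sum.cong simp: diff_diff_left)
  also have "{(j,k). j+k \<le> n} = Sigma {..n} (\<lambda>j. {..n-j})" by auto
  also have "(\<Sum>(j,k)\<in>Sigma {..n} (\<lambda>j. {..n-j}). T j k (n-j-k)) = (\<Sum>j\<le>n. \<Sum>k\<le>n-j. T j k (n-j-k))"
    by (subst sum.Sigma) auto
  also have "\<dots> = M f (M g h) n"
    by (simp add: smul_def T_def sum_distrib_left Fn_sum Fn_comp mult.assoc add.commute)
  finally show "M (M f g) h n = M f (M g h) n" .
qed

lemma smul_sadd_right: "M f (sadd g h) = sadd (M f g) (M f h)"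
  by (auto simp: smul_def sadd_def sum.distrib distrib_left)
lemma smul_sadd_left: "M (sadd f g) h = sadd (M f h) (M g h)"
  by (auto simp: smul_def sadd_def sum.distrib distrib_right)
lemma smul_szero_left[simp]: "M szero f = szero"
  by (auto simp: smul_def szero_def)
lemma smul_szero_right[simp]: "M f szero = szero"
  by (auto simp: smul_def szero_def)
lemma smul_zero_left[simp]: "M (\<lambda>n. 0) f = (\<lambda>n. 0)"
  by (auto simp: smul_def)
lemma smul_zero_right[simp]: "M f (\<lambda>n. 0) = (\<lambda>n. 0)"
  by (auto simp: smul_def)
lemma smul_neg_right: "M f (\<lambda>n. - g n) = (\<lambda>n. - M f g n)"
  by (auto simp: smul_def sum_negf)
lemma smul_neg_left: "M (\<lambda>n. - f n) g = (\<lambda>n. - M f g n)"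
  by (auto simp: smul_def sum_negf)
lemma smul_sum_right: "M f (\<lambda>n. \<Sum>a\<in>A. g a n) = (\<lambda>n. \<Sum>a\<in>A. M f (g a) n)"
  by (rule ext) (simp add: smul_def Fn_sum sum_distrib_left sum.swap[of _ A])
lemma smul_sum_left: "M (\<lambda>n. \<Sum>a\<in>A. f a n) g = (\<lambda>n. \<Sum>a\<in>A. M (f a) g n)"
  by (rule ext) (simp add: smul_def sum_distrib_right sum.swap[of _ A])

lemma smul_spow_left: "M (spow \<nu>) w n = (if n < \<nu> then 0 else (F^^\<nu>) (w (n-\<nu>)))"
proof -
  have "M (spow \<nu>) w n = (\<Sum>i\<le>n. if i = \<nu> then (F^^\<nu>) (w (n-\<nu>)) else 0)"
    unfolding smul_def spow_def by (rule sum.cong) auto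
  then show ?thesis by (simp add: sum.delta)
qed
lemma smul_spow_right: "M w (spow \<nu>) n = (if n < \<nu> then 0 else w (n-\<nu>))"
proof -
  have "M w (spow \<nu>) n = (\<Sum>i\<le>n. if i = n - \<nu> then (if n < \<nu> then 0 else w (n-\<nu>)) else 0)"
    unfolding smul_def spow_def
  proof (rule sum.cong)
    fix i assume "i \<in> {..n}"
    then show "w i * (F ^^ i) (if n - i = \<nu> then 1 else 0) =
         (if i = n - \<nu> then if n < \<nu> then 0 else w (n - \<nu>) else 0)"
      by (cases "n - i = \<nu>") auto
  qed simp
  then show ?thesis by (simp add: sum.delta)
qed
lemma smul_spow0_left[simp]: "M (spow 0) w = w"
  by (rule ext) (simp add: smul_spow_left)
lemma smul_spow0_right[simp]: "M w (spow 0) = w"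
  by (rule ext) (simp add: smul_spow_right)

definition vge :: "(nat \<Rightarrow> 'k) \<Rightarrow> nat \<Rightarrow> bool" where
  "vge f v \<longleftrightarrow> (\<forall>n<v. f n = 0)"

lemma vge_smul_left: "vge f v \<Longrightarrow> vge (M f g) v"
  by (auto simp: vge_def smul_def intro!: sum.neutral)
lemma vge_smul_right: "vge g v \<Longrightarrow> vge (M f g) v"
  by (auto simp: vge_def smul_def intro!: sum.neutral)

lemma factor_left: "vge a \<nu> \<Longrightarrow> a = M (spow \<nu>) (\<lambda>j. (P^^\<nu>) (a (j+\<nu>)))"
  by (rule ext) (auto simp: smul_spow_left vge_def)
lemma factor_right: "vge a \<nu> \<Longrightarrow> a = M (\<lambda>j. a (j+\<nu>)) (spow \<nu>)"
  by (rule ext) (auto simp: smul_spow_right vge_def)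

lemma smul_0: "M f g 0 = f 0 * g 0"
  by (simp add: smul_def)

fun rinv :: "(nat \<Rightarrow> 'k) \<Rightarrow> nat \<Rightarrow> 'k" where
  "rinv w n = (if n = 0 then inverse (w 0)
     else - inverse (w 0) * (\<Sum>i<n. w (Suc i) * (F^^(Suc i)) (rinv w (n - Suc i))))"

declare rinv.simps[simp del]

lemma rinv_correct: assumes "w 0 \<noteq> 0" shows "M w (rinv w) = spow 0"
proof
  fix n
  show "M w (rinv w) n = spow 0 n"
  proof (cases n)
    case 0 then show ?thesis using assms by (simp add: smul_def spow_def rinv.simps)
  next
    case (Suc m)
    have "M w (rinv w) n = w 0 * rinv w n + (\<Sum>i<n. w (Suc i) * (F^^(Suc i)) (rinv w (n - Suc i)))"
      unfolding smul_def by (subst sum.atMost_shift) simp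
    also have "\<dots> = 0" using assms Suc by (subst (1) rinv.simps) (simp add: field_simps)
    finally show ?thesis using Suc by (simp add: spow_def)
  qed
qed

lemma rinv_0: "rinv w 0 = inverse (w 0)" by (simp add: rinv.simps)

lemma unitI: fixes w :: "nat \<Rightarrow> 'k" assumes "w 0 \<noteq> 0" shows "sunit q w"
proof -
  let ?v = "rinv w"
  have 1: "M w ?v = spow 0" using rinv_correct[of w] assms by simp
  have "?v 0 \<noteq> 0" using assms by (simp add: rinv_0)
  then have 2: "M ?v (rinv ?v) = spow 0" by (rule rinv_correct)
  have "w = M w (M ?v (rinv ?v))" using 2 by simp
  also have "\<dots> = rinv ?v" by (simp add: smul_assoc[symmetric] 1)
  finally have "M ?v w = spow 0" using 2 by simp
  then show ?thesis using 1 unfolding sunit_def by blast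
qed

lemma unit_0: "sunit q (u :: nat \<Rightarrow> 'k) \<Longrightarrow> u 0 \<noteq> 0"
  unfolding sunit_def using smul_0[of u] by (auto simp: spow_def dest!: fun_cong[where x=0])


section \<open>column-space condition\<close>

lemma low_left: fixes g u :: "nat \<Rightarrow> 'k::field" assumes "\<forall>n\<le>m. g n = (if n = m then a else 0)"
  shows "\<forall>n\<le>m. M u g n = (if n = m then u 0 * a else 0)"
proof (intro allI impI)
  fix n assume n: "n \<le> m"
  have "M u g n = (\<Sum>j\<le>n. if j = 0 then (if n = m then u 0 * a else 0) else 0)"
    unfolding smul_def using assms n by (intro sum.cong) auto
  then show "M u g n = (if n = m then u 0 * a else 0)" by (simp add: sum.delta)
qed

definition sw :: "nat \<Rightarrow> nat \<Rightarrow> nat \<Rightarrow> nat" where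
  "sw i k a = (if a = i then k else if a = k then i else a)"

lemma sw_sw[simp]: "sw i k (sw i k a) = a" by (auto simp: sw_def)
lemma sw_lt: "i < r \<Longrightarrow> k < r \<Longrightarrow> a < r \<Longrightarrow> sw i k a < r" by (auto simp: sw_def)

lemma CC_swap_row: fixes A :: "nat \<Rightarrow> nat \<Rightarrow> nat \<Rightarrow> 'k" assumes "CC q r c m A" "i < r" "k < r"
  shows "CC q r c m (\<lambda>a b. if a = i then A k b else if a = k then A i b else A a b)"
  unfolding CC_def
proof
  fix \<kappa> :: "nat \<Rightarrow> 'k"
  obtain x where x: "\<forall>b<r. \<forall>n\<le>m. mv q c A x b n = (if n = m then (\<kappa> o sw i k) b else 0)"
    using assms(1) unfolding CC_def by blast
  show "\<exists>x. \<forall>b<r. \<forall>n\<le>m. mv q c (\<lambda>a b. if a = i then A k b else if a = k then A i b else A a b) x b n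
      = (if n = m then \<kappa> b else 0)"
  proof (intro exI allI impI)
    fix b n assume b: "b < r" and n: "n \<le> m"
    have "mv q c (\<lambda>a b. if a = i then A k b else if a = k then A i b else A a b) x b = mv q c A x (sw i k b)"
      by (auto simp: mv_def sw_def)
    then show "mv q c (\<lambda>a b. if a = i then A k b else if a = k then A i b else A a b) x b n
      = (if n = m then \<kappa> b else 0)" using x sw_lt[OF assms(2,3) b] n by simp
  qed
qed

lemma mv_scale_row: fixes A :: "nat \<Rightarrow> nat \<Rightarrow> nat \<Rightarrow> 'k" shows "mv q c (\<lambda>a b. if a = i then M u (A i b) else A a b) x i = M u (mv q c A x i)"
  by (simp add: mv_def smul_assoc smul_sum_right)

lemma CC_scale_row: fixes A :: "nat \<Rightarrow> nat \<Rightarrow> nat \<Rightarrow> 'k" assumes "CC q r c m A" "i < r" "sunit q u"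
  shows "CC q r c m (\<lambda>a b. if a = i then M u (A i b) else A a b)"
  unfolding CC_def
proof
  fix \<kappa> :: "nat \<Rightarrow> 'k"
  obtain x where x: "\<forall>b<r. \<forall>n\<le>m. mv q c A x b n = (if n = m then (\<kappa>(i := \<kappa> i / u 0)) b else 0)"
    using assms(1) unfolding CC_def by blast
  have u0: "u 0 \<noteq> 0" using unit_0[OF assms(3)] .
  show "\<exists>x. \<forall>b<r. \<forall>n\<le>m. mv q c (\<lambda>a b. if a = i then M u (A i b) else A a b) x b n
      = (if n = m then \<kappa> b else 0)"
  proof (intro exI allI impI)
    fix b n assume b: "b < r" and n: "n \<le> m"
    show "mv q c (\<lambda>a b. if a = i then M u (A i b) else A a b) x b n = (if n = m then \<kappa> b else 0)"
    proof (cases "b = i")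
      case True
      have "\<forall>n\<le>m. M u (mv q c A x i) n = (if n = m then u 0 * (\<kappa> i / u 0) else 0)"
        by (rule low_left) (use x assms(2) in auto)
      then show ?thesis using True n u0 by (simp add: mv_scale_row)
    next
      case False
      then have "mv q c (\<lambda>a b. if a = i then M u (A i b) else A a b) x b = mv q c A x b"
        by (simp add: mv_def)
      then show ?thesis using x b n False by simp
    qed
  qed
qed

lemma mv_add_row: fixes A :: "nat \<Rightarrow> nat \<Rightarrow> nat \<Rightarrow> 'k" shows "mv q c (\<lambda>a b. if a = i then sadd (A i b) (M y (A k b)) else A a b) x i n
   = mv q c A x i n + M y (mv q c A x k) n"
  by (simp add: mv_def smul_assoc smul_sum_right smul_sadd_left sadd_def sum.distrib)

lemma CC_add_row: fixes A :: "nat \<Rightarrow> nat \<Rightarrow> nat \<Rightarrow> 'k" assumes "CC q r c m A" "i < r" "k < r" "i \<noteq> k"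
  shows "CC q r c m (\<lambda>a b. if a = i then sadd (A i b) (M y (A k b)) else A a b)"
  unfolding CC_def
proof
  fix \<kappa> :: "nat \<Rightarrow> 'k"
  obtain x where x: "\<forall>b<r. \<forall>n\<le>m. mv q c A x b n = (if n = m then (\<kappa>(i := \<kappa> i - y 0 * \<kappa> k)) b else 0)"
    using assms(1) unfolding CC_def by blast
  show "\<exists>x. \<forall>b<r. \<forall>n\<le>m. mv q c (\<lambda>a b. if a = i then sadd (A i b) (M y (A k b)) else A a b) x b n
      = (if n = m then \<kappa> b else 0)"
  proof (intro exI allI impI)
    fix b n assume b: "b < r" and n: "n \<le> m"
    show "mv q c (\<lambda>a b. if a = i then sadd (A i b) (M y (A k b)) else A a b) x b n = (if n = m then \<kappa> b else 0)"
    proof (cases "b = i")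
      case True
      have "\<forall>n\<le>m. M y (mv q c A x k) n = (if n = m then y 0 * \<kappa> k else 0)"
        by (rule low_left) (use x assms in auto)
      then show ?thesis using True n x assms by (simp add: mv_add_row)
    next
      case False
      then have "mv q c (\<lambda>a b. if a = i then sadd (A i b) (M y (A k b)) else A a b) x b = mv q c A x b"
        by (simp add: mv_def)
      then show ?thesis using x b n False by simp
    qed
  qed
qed

lemma CC_colI: fixes A A' :: "nat \<Rightarrow> nat \<Rightarrow> nat \<Rightarrow> 'k" assumes "CC q r c m A" "\<And>x. \<exists>x'. \<forall>b<r. mv q c A' x' b = mv q c A x b"
  shows "CC q r c m A'"
  unfolding CC_def
proof
  fix \<kappa> :: "nat \<Rightarrow> 'k"
  obtain x where x: "\<forall>b<r. \<forall>n\<le>m. mv q c A x b n = (if n = m then \<kappa> b else 0)"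
    using assms(1) unfolding CC_def by blast
  obtain x' where "\<forall>b<r. mv q c A' x' b = mv q c A x b" using assms(2) by blast
  then show "\<exists>x. \<forall>b<r. \<forall>n\<le>m. mv q c A' x b n = (if n = m then \<kappa> b else 0)" using x
    by (intro exI[of _ x']) simp
qed

lemma CC_swap_col: fixes A :: "nat \<Rightarrow> nat \<Rightarrow> nat \<Rightarrow> 'k" assumes "CC q r c m A" "i < c" "k < c"
  shows "CC q r c m (\<lambda>a b. if b = i then A a k else if b = k then A a i else A a b)"
proof (rule CC_colI[OF assms(1)])
  fix x
  show "\<exists>x'. \<forall>b<r. mv q c (\<lambda>a b. if b = i then A a k else if b = k then A a i else A a b) x' b = mv q c A x b"
  proof (intro exI allI impI)
    fix b
    show "mv q c (\<lambda>a b. if b = i then A a k else if b = k then A a i else A a b) (x o sw i k) b = mv q c A x b"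
      unfolding mv_def
    proof (rule ext, rule sum.reindex_bij_witness[where i="sw i k" and j="sw i k"])
    qed (use assms in \<open>auto simp: sw_def\<close>)
  qed
qed

lemma CC_scale_col: fixes A :: "nat \<Rightarrow> nat \<Rightarrow> nat \<Rightarrow> 'k" assumes "CC q r c m A" "i < c" "sunit q u"
  shows "CC q r c m (\<lambda>a b. if b = i then M (A a i) u else A a b)"
proof (rule CC_colI[OF assms(1)])
  fix x
  obtain v where v: "M u v = spow 0" using assms(3) unfolding sunit_def by blast
  show "\<exists>x'. \<forall>b<r. mv q c (\<lambda>a b. if b = i then M (A a i) u else A a b) x' b = mv q c A x b"
  proof (intro exI allI impI)
    fix b
    show "mv q c (\<lambda>a b. if b = i then M (A a i) u else A a b) (x(i := M v (x i))) b = mv q c A x b"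
      unfolding mv_def
    proof (rule ext, rule sum.cong)
      fix n col
      have "M (M (A b i) u) (M v (x i)) = M (A b i) (x i)"
        by (simp add: smul_assoc) (simp add: smul_assoc[symmetric] v)
      then show "M ((\<lambda>a b. if b = i then M (A a i) u else A a b) b col) ((x(i := M v (x i))) col) n
         = M (A b col) (x col) n" by auto
    qed simp
  qed
qed

lemma CC_add_col: fixes A :: "nat \<Rightarrow> nat \<Rightarrow> nat \<Rightarrow> 'k" assumes "CC q r c m A" "i < c" "k < c" "i \<noteq> k"
  shows "CC q r c m (\<lambda>a b. if b = i then sadd (A a i) (M (A a k) y) else A a b)"
proof (rule CC_colI[OF assms(1)])
  fix x
  let ?x' = "x(k := sadd (x k) (M (\<lambda>n. - y n) (x i)))"
  show "\<exists>x'. \<forall>b<r. mv q c (\<lambda>a b. if b = i then sadd (A a i) (M (A a k) y) else A a b) x' b = mv q c A x b"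
  proof (intro exI allI impI)
    fix b
    show "mv q c (\<lambda>a b. if b = i then sadd (A a i) (M (A a k) y) else A a b) ?x' b = mv q c A x b"
      unfolding mv_def
    proof (rule ext)
      fix n
      have "(\<Sum>col<c. M ((\<lambda>a b. if b = i then sadd (A a i) (M (A a k) y) else A a b) b col) (?x' col) n)
        = (\<Sum>col<c. M (A b col) (x col) n + ((if col = i then M (M (A b k) y) (x i) n else 0)
              + (if col = k then - M (M (A b k) y) (x i) n else 0)))"
        using assms(4)
        by (intro sum.cong) (auto simp: smul_sadd_left smul_sadd_right sadd_def smul_neg_left smul_neg_right smul_assoc)
      also have "\<dots> = (\<Sum>col<c. M (A b col) (x col) n)"
        using assms(2,3) by (simp add: sum.distrib sum.delta)
      finally show "(\<Sum>col<c. M ((\<lambda>a b. if b = i then sadd (A a i) (M (A a k) y) else A a b) b col) (?x' col) n)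
        = (\<Sum>col<c. M (A b col) (x col) n)" .
    qed
  qed
qed

lemma CC_reach: fixes A B :: "nat \<Rightarrow> nat \<Rightarrow> nat \<Rightarrow> 'k" assumes "elem_reach q r c A B" "CC q r c m A" shows "CC q r c m B"
  using assms
proof (induction rule: elem_reach.induct)
  case refl then show ?case .
next
  case (swap_row M' i k) then show ?case using CC_swap_row by blast
next
  case (scale_row M' i u) then show ?case using CC_scale_row by blast
next
  case (add_row M' i k x) then show ?case using CC_add_row by blast
next
  case (swap_col M' i k) then show ?case using CC_swap_col by blast
next
  case (scale_col M' i u) then show ?case using CC_scale_col by blast
next
  case (add_col M' i k x) then show ?case using CC_add_col by blast
qed


section \<open>reduction\<close>

definition dn :: "nat \<Rightarrow> nat \<Rightarrow> nat \<Rightarrow> nat \<Rightarrow> (nat \<Rightarrow> nat \<Rightarrow> nat \<Rightarrow> 'k::field) \<Rightarrow> bool" where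
  "dn m r c k A \<longleftrightarrow> (\<forall>a<k. (\<forall>b<c. b \<noteq> a \<longrightarrow> A a b = szero) \<and> (\<forall>b<r. b \<noteq> a \<longrightarrow> A b a = szero)
      \<and> (\<exists>\<nu>\<le>m. A a a = spow \<nu>))"

lemma sadd_szero[simp]: "sadd f szero = f" "sadd szero f = f"
  by (auto simp: sadd_def szero_def)

lemma dn_swap_row: assumes "dn m r c k A" "k \<le> i" "k \<le> i'" "i < r" "i' < r"
  shows "dn m r c k (\<lambda>a b. if a = i then A i' b else if a = i' then A i b else A a b)"
  using assms unfolding dn_def by auto

lemma dn_swap_col: assumes "dn m r c k A" "k \<le> i" "k \<le> i'" "i < c" "i' < c"
  shows "dn m r c k (\<lambda>a b. if b = i then A a i' else if b = i' then A a i else A a b)"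
  using assms unfolding dn_def by auto

lemma dn_scale_col: fixes A :: "nat \<Rightarrow> nat \<Rightarrow> nat \<Rightarrow> 'k::field"
  assumes "dn m r c k A" "k \<le> i" "i < c"
  shows "dn m r c k (\<lambda>a b. if b = i then M (A a i) u else A a b)"
  using assms unfolding dn_def by auto

lemma dn_add_col: fixes A :: "nat \<Rightarrow> nat \<Rightarrow> nat \<Rightarrow> 'k::field"
  assumes "dn m r c k A" "k \<le> i" "k \<le> i'" "i < c" "i' < c"
  shows "dn m r c k (\<lambda>a b. if b = i then sadd (A a i) (M (A a i') y) else A a b)"
  using assms unfolding dn_def by auto

lemma dn_add_row: fixes A :: "nat \<Rightarrow> nat \<Rightarrow> nat \<Rightarrow> 'k::field"
  assumes "dn m r c k A" "k \<le> i" "k \<le> i'" "i < r" "i' < r"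
  shows "dn m r c k (\<lambda>a b. if a = i then sadd (A i b) (M y (A i' b)) else A a b)"
  using assms unfolding dn_def by auto


lemma sadd_neg: "sadd f (\<lambda>n. - f n) = szero" by (auto simp: sadd_def szero_def)

lemma clear_row:
  fixes B :: "nat \<Rightarrow> nat \<Rightarrow> nat \<Rightarrow> 'k::field"
  assumes reach: "elem_reach q r c A0 B" and cc: "CC q r c m B" and d: "dn m r c k B"
    and kr: "k < r" "k < c" and diag: "B k k = spow \<nu>" and v: "\<forall>b. k < b \<and> b < c \<longrightarrow> vge (B k b) \<nu>"
  shows "\<exists>B'. elem_reach q r c A0 B' \<and> CC q r c m B' \<and> dn m r c k B' \<and> B' k k = spow \<nu>
     \<and> (\<forall>b<c. b \<noteq> k \<longrightarrow> B' k b = szero) \<and> (\<forall>a. B' a k = B a k)"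
proof -
  have gen: "t \<le> c - Suc k \<Longrightarrow> \<exists>B'. elem_reach q r c A0 B' \<and> CC q r c m B' \<and> dn m r c k B'
     \<and> (\<forall>b. k < b \<and> b < Suc k + t \<longrightarrow> B' k b = szero) \<and> (\<forall>b. Suc k + t \<le> b \<longrightarrow> B' k b = B k b)
     \<and> (\<forall>a. B' a k = B a k)" for t
  proof (induction t)
    case 0
    then show ?case using reach cc d by (intro exI[of _ B]) auto
  next
    case (Suc t)
    then obtain B1 where r1: "elem_reach q r c A0 B1" and c1: "CC q r c m B1" and d1: "dn m r c k B1"
      and z1: "\<forall>b. k < b \<and> b < Suc k + t \<longrightarrow> B1 k b = szero"
      and e1: "\<forall>b. Suc k + t \<le> b \<longrightarrow> B1 k b = B k b" and col1: "\<forall>a. B1 a k = B a k" by auto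
    define j where "j = Suc k + t"
    have jc: "j < c" using Suc.prems j_def by auto
    have vj: "vge (B1 k j) \<nu>" using v e1 jc j_def by auto
    define y where "y = (\<lambda>i. (P^^\<nu>) (B1 k j (i+\<nu>)))"
    have fy: "B1 k j = M (spow \<nu>) y" unfolding y_def by (rule factor_left[OF vj])
    define B2 where "B2 = (\<lambda>a b. if b = j then sadd (B1 a j) (M (B1 a k) (\<lambda>n. - y n)) else B1 a b)"
    have jk: "j \<noteq> k" "k \<le> j" using j_def by auto
    have r2: "elem_reach q r c A0 B2" unfolding B2_def
      by (rule elem_reach.add_col[OF r1 jc kr(2) jk(1)])
    have c2: "CC q r c m B2" unfolding B2_def by (rule CC_add_col[OF c1 jc kr(2) jk(1)])
    have d2: "dn m r c k B2" unfolding B2_def by (rule dn_add_col[OF d1 jk(2) _ jc kr(2)]) simp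
    have "B2 k j = szero" unfolding B2_def using fy col1 diag
      by (simp add: smul_neg_right sadd_neg)
    note z2 = this
    have "\<forall>b. k < b \<and> b < Suc k + Suc t \<longrightarrow> B2 k b = szero"
    proof (intro allI impI)
      fix b assume "k < b \<and> b < Suc k + Suc t"
      then have "b = j \<or> (k < b \<and> b < Suc k + t)" using j_def by auto
      then show "B2 k b = szero" using z2 z1 jk by (auto simp: B2_def)
    qed
    moreover have "\<forall>b. Suc k + Suc t \<le> b \<longrightarrow> B2 k b = B k b"
      using e1 j_def by (auto simp: B2_def)
    moreover have "\<forall>a. B2 a k = B a k" using col1 jk by (auto simp: B2_def)
    ultimately show ?case using r2 c2 d2 by blast
  qed
  obtain B' where "elem_reach q r c A0 B'" "CC q r c m B'" "dn m r c k B'"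
     "\<forall>b. k < b \<and> b < Suc k + (c - Suc k) \<longrightarrow> B' k b = szero"
     "\<forall>a. B' a k = B a k"
    using gen[of "c - Suc k"] by auto
  moreover have "\<forall>b<c. b \<noteq> k \<longrightarrow> B' k b = szero"
  proof (intro allI impI)
    fix b assume "b < c" "b \<noteq> k"
    show "B' k b = szero"
    proof (cases "b < k")
      case True
      then show ?thesis using \<open>dn m r c k B'\<close> kr \<open>b \<noteq> k\<close> unfolding dn_def by auto
    next
      case False
      then show ?thesis using \<open>b < c\<close> \<open>b \<noteq> k\<close> calculation(4) kr by auto
    qed
  qed
  ultimately show ?thesis using diag by (intro exI[of _ B']) auto
qed

lemma clear_col:
  fixes B :: "nat \<Rightarrow> nat \<Rightarrow> nat \<Rightarrow> 'k::field"
  assumes reach: "elem_reach q r c A0 B" and cc: "CC q r c m B" and d: "dn m r c k B"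
    and kr: "k < r" "k < c" and diag: "B k k = spow \<nu>" and nm: "\<nu> \<le> m"
    and rowz: "\<forall>b<c. b \<noteq> k \<longrightarrow> B k b = szero"
    and v: "\<forall>a. k < a \<and> a < r \<longrightarrow> vge (B a k) \<nu>"
  shows "\<exists>B'. elem_reach q r c A0 B' \<and> CC q r c m B' \<and> dn m r c (Suc k) B'"
proof -
  have gen: "t \<le> r - Suc k \<Longrightarrow> \<exists>B'. elem_reach q r c A0 B' \<and> CC q r c m B' \<and> dn m r c k B'
     \<and> (\<forall>a. k < a \<and> a < Suc k + t \<longrightarrow> B' a k = szero) \<and> (\<forall>a. Suc k + t \<le> a \<longrightarrow> B' a k = B a k)
     \<and> (\<forall>b. B' k b = B k b)" for t
  proof (induction t)
    case 0
    then show ?case using reach cc d by (intro exI[of _ B]) auto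
  next
    case (Suc t)
    then obtain B1 where r1: "elem_reach q r c A0 B1" and c1: "CC q r c m B1" and d1: "dn m r c k B1"
      and z1: "\<forall>a. k < a \<and> a < Suc k + t \<longrightarrow> B1 a k = szero"
      and e1: "\<forall>a. Suc k + t \<le> a \<longrightarrow> B1 a k = B a k" and row1: "\<forall>b. B1 k b = B k b" by auto
    define j where "j = Suc k + t"
    have jr: "j < r" using Suc.prems j_def by auto
    have vj: "vge (B1 j k) \<nu>" using v e1 jr j_def by auto
    define y where "y = (\<lambda>i. B1 j k (i+\<nu>))"
    have fy: "B1 j k = M y (spow \<nu>)" unfolding y_def by (rule factor_right[OF vj])
    define B2 where "B2 = (\<lambda>a b. if a = j then sadd (B1 j b) (M (\<lambda>n. - y n) (B1 k b)) else B1 a b)"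
    have jk: "j \<noteq> k" "k \<le> j" using j_def by auto
    have r2: "elem_reach q r c A0 B2" unfolding B2_def
      by (rule elem_reach.add_row[OF r1 jr kr(1) jk(1)])
    have c2: "CC q r c m B2" unfolding B2_def by (rule CC_add_row[OF c1 jr kr(1) jk(1)])
    have d2: "dn m r c k B2" unfolding B2_def by (rule dn_add_row[OF d1 jk(2) _ jr kr(1)]) simp
    have "B2 j k = szero" unfolding B2_def using fy row1 diag
      by (simp add: smul_neg_left sadd_neg)
    note z2 = this
    have "\<forall>a. k < a \<and> a < Suc k + Suc t \<longrightarrow> B2 a k = szero"
    proof (intro allI impI)
      fix a assume "k < a \<and> a < Suc k + Suc t"
      then have "a = j \<or> (k < a \<and> a < Suc k + t)" using j_def by auto
      then show "B2 a k = szero" using z2 z1 jk by (auto simp: B2_def)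
    qed
    moreover have "\<forall>a. Suc k + Suc t \<le> a \<longrightarrow> B2 a k = B a k"
      using e1 j_def by (auto simp: B2_def)
    moreover have "\<forall>b. B2 k b = B k b" using row1 jk by (auto simp: B2_def)
    ultimately show ?case using r2 c2 d2 by blast
  qed
  obtain B' where B': "elem_reach q r c A0 B'" "CC q r c m B'" "dn m r c k B'"
     "\<forall>a. k < a \<and> a < Suc k + (r - Suc k) \<longrightarrow> B' a k = szero"
     "\<forall>b. B' k b = B k b"
    using gen[of "r - Suc k"] by auto
  have "dn m r c (Suc k) B'"
    unfolding dn_def
  proof (intro allI impI)
    fix a assume a: "a < Suc k"
    show "(\<forall>b<c. b \<noteq> a \<longrightarrow> B' a b = szero) \<and> (\<forall>b<r. b \<noteq> a \<longrightarrow> B' b a = szero) \<and> (\<exists>\<nu>\<le>m. B' a a = spow \<nu>)"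
    proof (cases "a = k")
      case True
      have "\<forall>b<r. b \<noteq> k \<longrightarrow> B' b k = szero"
      proof (intro allI impI)
        fix b assume "b < r" "b \<noteq> k"
        show "B' b k = szero"
        proof (cases "b < k")
          case True
          then show ?thesis using B'(3) kr \<open>b \<noteq> k\<close> unfolding dn_def by auto
        next
          case False
          then show ?thesis using \<open>b < r\<close> \<open>b \<noteq> k\<close> B'(4) kr by auto
        qed
      qed
      then show ?thesis using True B'(5) rowz diag nm by auto
    next
      case False
      then show ?thesis using B'(3) a unfolding dn_def by auto
    qed
  qed
  then show ?thesis using B' by blast
qed


lemma step:
  fixes B :: "nat \<Rightarrow> nat \<Rightarrow> nat \<Rightarrow> 'k::field"
  assumes reach: "elem_reach q r c A0 B" and cc: "CC q r c m B" and d: "dn m r c k B" and kr: "k < r"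
  shows "\<exists>B'. elem_reach q r c A0 B' \<and> CC q r c m B' \<and> dn m r c (Suc k) B' \<and> k < c"
proof -
  obtain x where x: "\<forall>b<r. \<forall>n\<le>m. mv q c B x b n = (if n = m then (if b = k then 1 else 0) else 0)"
    using cc[unfolded CC_def, THEN spec, of "\<lambda>b. if b = k then 1 else 0"] by blast
  then have xk: "mv q c B x k m = 1" using kr by auto
  have "\<exists>b n. k \<le> b \<and> b < c \<and> n \<le> m \<and> B k b n \<noteq> 0"
  proof (rule ccontr)
    assume "\<not> ?thesis"
    then have h: "\<forall>b. k \<le> b \<and> b < c \<longrightarrow> vge (B k b) (Suc m)" by (auto simp: vge_def)
    have "\<forall>col<c. M (B k col) (x col) m = 0"
    proof (intro allI impI)
      fix col assume col: "col < c"
      show "M (B k col) (x col) m = 0"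
      proof (cases "col < k")
        case True
        then have "B k col = szero" using d kr unfolding dn_def by auto
        then show ?thesis by (simp add: szero_def)
      next
        case False
        then have "vge (M (B k col) (x col)) (Suc m)" using h col by (auto intro: vge_smul_left)
        then show ?thesis by (simp add: vge_def)
      qed
    qed
    then have "mv q c B x k m = 0" by (simp add: mv_def)
    then show False using xk by simp
  qed
  then obtain b1 n1 where b1: "k \<le> b1" "b1 < c" "n1 \<le> m" "B k b1 n1 \<noteq> 0" by blast
  have kc: "k < c" using b1 by simp
  define Q where "Q = (\<lambda>n. \<exists>a b. k \<le> a \<and> a < r \<and> k \<le> b \<and> b < c \<and> B a b n \<noteq> 0)"
  define \<nu> where "\<nu> = (LEAST n. Q n)"
  have Qn1: "Q n1" unfolding Q_def using b1 kr by blast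
  have "\<nu> \<le> n1" unfolding \<nu>_def by (rule Least_le) (rule Qn1)
  then have nm: "\<nu> \<le> m" using b1 by simp
  have "Q \<nu>" unfolding \<nu>_def by (rule LeastI) (rule Qn1)
  then obtain a0 b0 where ab0: "k \<le> a0" "a0 < r" "k \<le> b0" "b0 < c" "B a0 b0 \<nu> \<noteq> 0"
    unfolding Q_def by blast
  have allv: "\<forall>a b. k \<le> a \<and> a < r \<and> k \<le> b \<and> b < c \<longrightarrow> vge (B a b) \<nu>"
  proof (intro allI impI)
    fix a b assume ab: "k \<le> a \<and> a < r \<and> k \<le> b \<and> b < c"
    show "vge (B a b) \<nu>" unfolding vge_def
    proof (intro allI impI)
      fix n assume "n < \<nu>"
      then have "\<not> Q n" unfolding \<nu>_def by (rule not_less_Least)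
      then show "B a b n = 0" using ab unfolding Q_def by blast
    qed
  qed
  define B1 where "B1 = (\<lambda>a b. if a = k then B a0 b else if a = a0 then B k b else B a b)"
  have r1: "elem_reach q r c A0 B1" unfolding B1_def by (rule elem_reach.swap_row[OF reach kr ab0(2)])
  have c1: "CC q r c m B1" unfolding B1_def by (rule CC_swap_row[OF cc kr ab0(2)])
  have d1: "dn m r c k B1" unfolding B1_def by (rule dn_swap_row[OF d _ ab0(1) kr ab0(2)]) simp
  have v1: "\<forall>a b. k \<le> a \<and> a < r \<and> k \<le> b \<and> b < c \<longrightarrow> vge (B1 a b) \<nu>"
    
  proof (intro allI impI)
    fix a b assume ab: "k \<le> a \<and> a < r \<and> k \<le> b \<and> b < c"
    have "vge (B (if a = k then a0 else if a = a0 then k else a) b) \<nu>"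
      by (rule allv[rule_format]) (use ab ab0 in auto)
    then show "vge (B1 a b) \<nu>" by (simp add: B1_def split: if_splits)
  qed
  have e1: "B1 k b0 \<nu> \<noteq> 0" using ab0 by (simp add: B1_def)
  define B2 where "B2 = (\<lambda>a b. if b = k then B1 a b0 else if b = b0 then B1 a k else B1 a b)"
  have r2: "elem_reach q r c A0 B2" unfolding B2_def by (rule elem_reach.swap_col[OF r1 kc ab0(4)])
  have c2: "CC q r c m B2" unfolding B2_def by (rule CC_swap_col[OF c1 kc ab0(4)])
  have d2: "dn m r c k B2" unfolding B2_def by (rule dn_swap_col[OF d1 _ ab0(3) kc ab0(4)]) simp
  have v2: "\<forall>a b. k \<le> a \<and> a < r \<and> k \<le> b \<and> b < c \<longrightarrow> vge (B2 a b) \<nu>"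
    
  proof (intro allI impI)
    fix a b assume ab: "k \<le> a \<and> a < r \<and> k \<le> b \<and> b < c"
    have "vge (B1 a (if b = k then b0 else if b = b0 then k else b)) \<nu>"
      by (rule v1[rule_format]) (use ab ab0 kc in auto)
    then show "vge (B2 a b) \<nu>" by (simp add: B2_def split: if_splits)
  qed
  have e2: "B2 k k \<nu> \<noteq> 0" using e1 by (simp add: B2_def)
  define w where "w = (\<lambda>j. (P^^\<nu>) (B2 k k (j+\<nu>)))"
  have fw: "B2 k k = M (spow \<nu>) w" unfolding w_def by (rule factor_left) (use v2 kr kc in auto)
  have w0: "w 0 \<noteq> 0" using e2 by (simp add: w_def)
  define u where "u = rinv w"
  have wu: "M w u = spow 0" unfolding u_def using rinv_correct w0 by blast
  have uu: "sunit q u" by (rule unitI) (use w0 in \<open>simp add: u_def rinv_0\<close>)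
  define B3 where "B3 = (\<lambda>a b. if b = k then M (B2 a k) u else B2 a b)"
  have r3: "elem_reach q r c A0 B3" unfolding B3_def by (rule elem_reach.scale_col[OF r2 kc uu])
  have c3: "CC q r c m B3" unfolding B3_def by (rule CC_scale_col[OF c2 kc uu])
  have d3: "dn m r c k B3" unfolding B3_def by (rule dn_scale_col[OF d2 _ kc]) simp
  have dg3: "B3 k k = spow \<nu>" by (simp add: B3_def fw smul_assoc wu)
  have rv3: "\<forall>b. k < b \<and> b < c \<longrightarrow> vge (B3 k b) \<nu>" 
  proof (intro allI impI)
    fix b assume ab: "k < b \<and> b < c"
    have "vge (B2 k b) \<nu>" by (rule v2[rule_format]) (use ab kr in auto)
    then show "vge (B3 k b) \<nu>" using ab by (simp add: B3_def)
  qed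
  have cv3: "\<forall>a. k < a \<and> a < r \<longrightarrow> vge (B3 a k) \<nu>" 
  proof (intro allI impI)
    fix a assume ab: "k < a \<and> a < r"
    have "vge (B2 a k) \<nu>" by (rule v2[rule_format]) (use ab kc in auto)
    then show "vge (B3 a k) \<nu>" by (simp add: B3_def vge_smul_left)
  qed
  obtain B4 where B4: "elem_reach q r c A0 B4" "CC q r c m B4" "dn m r c k B4" "B4 k k = spow \<nu>"
     "\<forall>b<c. b \<noteq> k \<longrightarrow> B4 k b = szero" "\<forall>a. B4 a k = B3 a k"
    using clear_row[OF r3 c3 d3 kr kc dg3 rv3] by blast
  have cv4: "\<forall>a. k < a \<and> a < r \<longrightarrow> vge (B4 a k) \<nu>" using cv3 B4(6) by simp
  obtain B5 where "elem_reach q r c A0 B5 \<and> CC q r c m B5 \<and> dn m r c (Suc k) B5"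
    using clear_col[OF B4(1,2,3) kr kc B4(4) nm B4(5) cv4] by blast
  then show ?thesis using kc by blast
qed

lemma reduce:
  fixes A0 :: "nat \<Rightarrow> nat \<Rightarrow> nat \<Rightarrow> 'k::field"
  assumes "CC q r c m A0"
  shows "\<exists>B. elem_reach q r c A0 B \<and> dn m r c r B \<and> r \<le> c"
proof -
  have "k \<le> r \<Longrightarrow> \<exists>B. elem_reach q r c A0 B \<and> CC q r c m B \<and> dn m r c k B \<and> k \<le> c" for k
  proof (induction k)
    case 0 then show ?case using assms by (intro exI[of _ A0]) (auto simp: dn_def intro: elem_reach.refl)
  next
    case (Suc k)
    then obtain B where "elem_reach q r c A0 B" "CC q r c m B" "dn m r c k B" by auto
    then show ?case using step[of r c A0 B m k] Suc.prems by auto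
  qed
  then show ?thesis by blast
qed

lemma rank_result:
  fixes A0 :: "nat \<Rightarrow> nat \<Rightarrow> nat \<Rightarrow> 'k::field"
  assumes "CC q r c m A0"
  shows "rank_mod_sigma q r c A0 (Suc m) r"
proof -
  obtain B where B: "elem_reach q r c A0 B" "dn m r c r B" "r \<le> c" using reduce[OF assms] by blast
  have "sdiag_form r c B" using B unfolding sdiag_form_def dn_def by auto
  moreover have "{a. a < min r c \<and> (\<exists>\<nu><Suc m. B a a = spow \<nu>)} = {..<r}"
    using B unfolding dn_def by (auto simp: less_Suc_eq_le)
  ultimately show ?thesis unfolding rank_mod_sigma_def using B by (intro exI[of _ B]) auto
qed


section \<open>tau side\<close>

lemma tmul_coeff: fixes f g :: "'k::field poly" shows "coeff (tmul q f g) n = (\<Sum>i\<le>n. coeff f i * (P^^i) (coeff g (n-i)))"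
proof -
  define T where "T = (\<lambda>i. coeff f i * (P^^i) (coeff g (n-i)))"
  have "coeff (tmul q f g) n = (\<Sum>i\<le>degree f. \<Sum>j\<le>degree g. if i + j = n then coeff f i * (P^^i) (coeff g j) else 0)"
    by (simp add: tmul_def coeff_sum)
  also have "\<dots> = (\<Sum>i\<le>degree f. if i \<le> n then T i else 0)"
  proof (rule sum.cong[OF HOL.refl])
    fix i
    show "(\<Sum>j\<le>degree g. if i + j = n then coeff f i * (P^^i) (coeff g j) else 0) = (if i \<le> n then T i else 0)"
    proof (cases "i \<le> n")
      case True
      have "(\<Sum>j\<le>degree g. if i + j = n then coeff f i * (P^^i) (coeff g j) else 0)
          = (\<Sum>j\<le>degree g. if j = n - i then T i else 0)"
        using True by (intro sum.cong) (auto simp: T_def)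
      also have "\<dots> = (if n - i \<le> degree g then T i else 0)" by (simp add: sum.delta)
      also have "\<dots> = T i" by (auto simp: T_def coeff_eq_0)
      finally show ?thesis using True by simp
    qed auto
  qed
  also have "\<dots> = (\<Sum>i\<le>degree f + n. if i \<le> n then T i else 0)"
    by (rule sum.mono_neutral_left) (auto simp: T_def coeff_eq_0)
  also have "\<dots> = (\<Sum>i\<le>n. if i \<le> n then T i else 0)"
    by (rule sum.mono_neutral_right) auto
  finally show ?thesis by (simp add: T_def)
qed

lemma tmul_const_coeff: fixes f g :: "'k::field poly" shows "coeff (tmul q f [:c:]) n = coeff f n * (P^^n) c"
proof -
  have "coeff (tmul q f [:c:]) n = (\<Sum>i\<le>n. if i = n then coeff f n * (P^^n) c else 0)"
    unfolding tmul_coeff by (intro sum.cong) (auto simp: coeff_pCons split: nat.split)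
  then show ?thesis by simp
qed

lemma tmul_assoc_const: fixes f g :: "'k::field poly" shows "tmul q (tmul q f g) [:c:] = tmul q f (tmul q g [:c:])"
proof (rule poly_eqI)
  fix n
  have "coeff (tmul q f (tmul q g [:c:])) n = (\<Sum>i\<le>n. coeff f i * (P^^i) (coeff g (n-i)) * (P^^n) c)"
  proof -
    have pw: "(P^^i) ((P^^(n-i)) c) = (P^^n) c" if "i \<le> n" for i
    proof -
      have "(P^^i) ((P^^(n-i)) c) = (P^^(i + (n-i))) c" by (simp add: funpow_add)
      then show ?thesis using that by simp
    qed
    have "coeff (tmul q f (tmul q g [:c:])) n = (\<Sum>i\<le>n. coeff f i * (P^^i) (coeff (tmul q g [:c:]) (n-i)))"
      by (rule tmul_coeff)
    also have "\<dots> = (\<Sum>i\<le>n. coeff f i * (P^^i) (coeff g (n-i)) * (P^^n) c)"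
      by (intro sum.cong) (auto simp: tmul_const_coeff pw mult.assoc)
    finally show ?thesis .
  qed
  moreover have "coeff (tmul q (tmul q f g) [:c:]) n = (\<Sum>i\<le>n. coeff f i * (P^^i) (coeff g (n-i)) * (P^^n) c)"
    by (simp only: tmul_const_coeff[of "tmul q f g"]) (simp add: tmul_coeff[of f g] sum_distrib_right)
  ultimately show "coeff (tmul q (tmul q f g) [:c:]) n = coeff (tmul q f (tmul q g [:c:])) n"
    by simp
qed

lemma tmul_sum_right: fixes f :: "'k::field poly" shows "tmul q f (\<Sum>a\<in>A. g a) = (\<Sum>a\<in>A. tmul q f (g a))"
  by (rule poly_eqI) (simp add: tmul_coeff coeff_sum Pn_sum sum_distrib_left sum.swap[of _ A])

lemma tmul_sum_left: fixes g :: "'k::field poly" shows "tmul q (\<Sum>a\<in>A. f a) g = (\<Sum>a\<in>A. tmul q (f a) g)"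
  by (rule poly_eqI) (simp add: tmul_coeff coeff_sum sum_distrib_right sum.swap[of _ A])

lemma tmul_one: fixes f g :: "'k::field poly" shows "tmul q 1 g = g"
proof (rule poly_eqI)
  fix n
  have "coeff (tmul q 1 g) n = (\<Sum>i\<le>n. if i = 0 then coeff g n else 0)"
    unfolding tmul_coeff by (intro sum.cong) (auto simp: coeff_1)
  then show "coeff (tmul q 1 g) n = coeff g n" by simp
qed

lemma tmul_zero: fixes f g :: "'k::field poly" shows "tmul q 0 g = 0"
  by (rule poly_eqI) (simp add: tmul_coeff)

lemma tmul_zero_right: fixes f g :: "'k::field poly" shows "tmul q f 0 = 0"
  by (rule poly_eqI) (simp add: tmul_coeff)

lemma degree_tmul: fixes f g :: "'k::field poly" shows "degree (tmul q f g) \<le> degree f + degree g"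
proof (rule degree_le, intro allI impI)
  fix n assume n: "degree f + degree g < n"
  show "coeff (tmul q f g) n = 0" unfolding tmul_coeff
  proof (rule sum.neutral, intro ballI)
    fix i assume "i \<in> {..n}"
    show "coeff f i * (P^^i) (coeff g (n-i)) = 0"
    proof (cases "i \<le> degree f")
      case True then have "coeff g (n-i) = 0" using n by (intro coeff_eq_0) auto
      then show ?thesis by simp
    next
      case False then show ?thesis by (simp add: coeff_eq_0)
    qed
  qed
qed


lemma key:
  fixes f h :: "'k::field poly"
  assumes df: "degree f \<le> s" and dh: "degree h \<le> L"
  shows "M (sigma_shift q s f) (lrsh q 0 L h) = lrsh q s L (tmul q f h)"
proof (rule ext)
  fix n
  define G where "G = (\<lambda>a. (F^^s) (coeff f a) * (F^^(s-a)) (coeff h (s+L-n-a)))"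
  show "M (sigma_shift q s f) (lrsh q 0 L h) n = lrsh q s L (tmul q f h) n"
  proof (cases "n \<le> s + L")
    case False
    have "M (sigma_shift q s f) (lrsh q 0 L h) n = 0"
      unfolding smul_def
    proof (rule sum.neutral, intro ballI)
      fix i assume "i \<in> {..n}"
      show "sigma_shift q s f i * (F^^i) (lrsh q 0 L h (n - i)) = 0"
        using False by (auto simp: sigma_shift_def lrsh_def)
    qed
    then show ?thesis using False by (simp add: lrsh_def)
  next
    case True
    have R: "lrsh q s L (tmul q f h) n = sum G ({..s+L-n} \<inter> {..s})"
    proof -
      have "lrsh q s L (tmul q f h) n = (\<Sum>a\<le>s+L-n. (F^^s) (coeff f a) * (F^^s) ((P^^a) (coeff h (s+L-n-a))))"
        using True by (simp add: lrsh_def tmul_coeff Fn_sum)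
      also have "\<dots> = (\<Sum>a\<le>s+L-n. if a \<in> {..s} then G a else 0)"
      proof (rule sum.cong[OF HOL.refl])
        fix a
        show "(F^^s) (coeff f a) * (F^^s) ((P^^a) (coeff h (s+L-n-a))) = (if a \<in> {..s} then G a else 0)"
        proof (cases "a \<le> s")
          case True then show ?thesis by (simp add: G_def Fn_Pa)
        next
          case False then have "coeff f a = 0" using df by (intro coeff_eq_0) auto
          then show ?thesis using False by simp
        qed
      qed
      also have "\<dots> = sum G ({..s+L-n} \<inter> {..s})" by (rule sum.inter_restrict[symmetric]) simp
      finally show ?thesis .
    qed
    define T where "T = (\<lambda>i. (F^^s) (coeff f (s-i)) * (F^^i) (coeff h (L-(n-i))))"
    have L1: "M (sigma_shift q s f) (lrsh q 0 L h) n = sum T ({..n} \<inter> {i. i \<le> s \<and> n - i \<le> L})"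
    proof -
      have "M (sigma_shift q s f) (lrsh q 0 L h) n = (\<Sum>i\<le>n. if i \<in> {i. i \<le> s \<and> n - i \<le> L} then T i else 0)"
        unfolding smul_def by (intro sum.cong) (auto simp: sigma_shift_def lrsh_def T_def)
      also have "\<dots> = sum T ({..n} \<inter> {i. i \<le> s \<and> n - i \<le> L})"
        by (rule sum.inter_restrict[symmetric]) simp
      finally show ?thesis .
    qed
    have L2: "sum T ({..n} \<inter> {i. i \<le> s \<and> n - i \<le> L}) = sum G {a. a \<le> s \<and> s - a \<le> n \<and> a \<le> s+L-n}"
    proof -
      have pw: "T i = G (s - i)" if "i \<in> {..n} \<inter> {i. i \<le> s \<and> n - i \<le> L}" for i
      proof -
        have e1: "s + L - n - (s - i) = L - (n - i)" and e2: "s - (s - i) = i" using that True by auto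
        show ?thesis unfolding T_def G_def e1 e2 by (rule HOL.refl)
      qed
      show ?thesis
        apply (rule sum.reindex_bij_witness[where i="\<lambda>a. s - a" and j="\<lambda>i. s - i"])
        subgoal by auto
        subgoal using True by auto
        subgoal by auto
        subgoal using True by auto
        subgoal using pw by auto
        done
    qed
    have L3: "sum G {a. a \<le> s \<and> s - a \<le> n \<and> a \<le> s+L-n} = sum G ({..s+L-n} \<inter> {..s})"
    proof (rule sum.mono_neutral_left)
      show "\<forall>a\<in>{..s+L-n} \<inter> {..s} - {a. a \<le> s \<and> s - a \<le> n \<and> a \<le> s+L-n}. G a = 0"
      proof
        fix a assume a: "a \<in> {..s+L-n} \<inter> {..s} - {a. a \<le> s \<and> s - a \<le> n \<and> a \<le> s+L-n}"
        then have "coeff h (s+L-n-a) = 0" using dh by (intro coeff_eq_0) auto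
        then show "G a = 0" by (simp add: G_def)
      qed
    qed auto
    show ?thesis using L1 L2 L3 R by simp
  qed
qed


definition cst :: "'k::field \<Rightarrow> nat \<Rightarrow> 'k" where "cst c = (\<lambda>n. if n = 0 then c else 0)"

lemma smul_cst: "M f (cst c) n = f n * (F^^n) c"
proof -
  have "M f (cst c) n = (\<Sum>i\<le>n. if i = n then f n * (F^^n) c else 0)"
    unfolding smul_def cst_def by (intro sum.cong) auto
  then show ?thesis by simp
qed

lemma mv_comb:
  fixes A :: "nat \<Rightarrow> nat \<Rightarrow> nat \<Rightarrow> 'k::field"
  shows "mv q c A (\<lambda>col n. \<Sum>a\<in>S. M (xs a col) (z a) n) b = (\<lambda>n. \<Sum>a\<in>S. M (mv q c A (xs a) b) (z a) n)"
proof (rule ext)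
  fix n
  have "mv q c A (\<lambda>col n. \<Sum>a\<in>S. M (xs a col) (z a) n) b n
      = (\<Sum>col<c. \<Sum>a\<in>S. M (M (A b col) (xs a col)) (z a) n)"
    by (simp add: mv_def smul_sum_right smul_assoc)
  also have "\<dots> = (\<Sum>a\<in>S. \<Sum>col<c. M (M (A b col) (xs a col)) (z a) n)"
    by (rule sum.swap)
  also have "\<dots> = (\<Sum>a\<in>S. M (mv q c A (xs a) b) (z a) n)"
    by (simp add: mv_def smul_sum_left)
  finally show "mv q c A (\<lambda>col n. \<Sum>a\<in>S. M (xs a col) (z a) n) b n = (\<Sum>a\<in>S. M (mv q c A (xs a) b) (z a) n)" .
qed

lemma CC_basis:
  fixes A :: "nat \<Rightarrow> nat \<Rightarrow> nat \<Rightarrow> 'k::field"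
  assumes "\<forall>a<r. \<exists>x. \<forall>b<r. \<forall>n\<le>m. mv q c A x b n = (if n = m \<and> b = a then 1 else 0)"
  shows "CC q r c m A"
proof -
  from assms have "\<forall>a. \<exists>x. a < r \<longrightarrow> (\<forall>b<r. \<forall>n\<le>m. mv q c A x b n = (if n = m \<and> b = a then 1 else 0))"
    by blast
  then obtain xs where xs: "\<forall>a. a < r \<longrightarrow> (\<forall>b<r. \<forall>n\<le>m. mv q c A (xs a) b n = (if n = m \<and> b = a then 1 else 0))"
    by (rule choice[THEN exE]) blast
  show ?thesis unfolding CC_def
  proof
    fix \<kappa> :: "nat \<Rightarrow> 'k"
    define z where "z = (\<lambda>a. cst ((P^^m) (\<kappa> a)))"
    define x where "x = (\<lambda>col n. \<Sum>a<r. M (xs a col) (z a) n)"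
    show "\<exists>x. \<forall>b<r. \<forall>n\<le>m. mv q c A x b n = (if n = m then \<kappa> b else 0)"
    proof (intro exI[of _ x] allI impI)
      fix b n assume b: "b < r" and n: "n \<le> m"
      have "mv q c A x b n = (\<Sum>a<r. mv q c A (xs a) b n * (F^^n) ((P^^m) (\<kappa> a)))"
        unfolding x_def mv_comb by (simp add: z_def smul_cst)
      also have "\<dots> = (\<Sum>a<r. if a = b then (if n = m then \<kappa> b else 0) else 0)"
        using xs b n by (intro sum.cong) auto
      also have "\<dots> = (if n = m then \<kappa> b else 0)" using b by simp
      finally show "mv q c A x b n = (if n = m then \<kappa> b else 0)" .
    qed
  qed
qed

lemma lrsh_sum: fixes f :: "'a \<Rightarrow> 'k::field poly" shows "lrsh q s L (\<Sum>a\<in>A. f a) n = (\<Sum>a\<in>A. lrsh q s L (f a) n)"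
  by (simp add: lrsh_def coeff_sum Fn_sum)

lemma lrsh_zero: "lrsh q s L (0::'k::field poly) n = 0"
  by (simp add: lrsh_def)

end

lemma sum_divmod:
  fixes d :: nat
  assumes "0 < d"
  shows "(\<Sum>col<nb*d. g (col div d) (col mod d)) = (\<Sum>jj<nb. \<Sum>k<d. g jj k)"
proof -
  have "(\<Sum>jj<nb. \<Sum>k<d. g jj k) = (\<Sum>(jj,k)\<in>{..<nb} \<times> {..<d}. g jj k)"
    by (rule sum.cartesian_product)
  also have "\<dots> = (\<Sum>col<nb*d. g (col div d) (col mod d))"
  proof (rule sum.reindex_bij_witness[where i="\<lambda>col. (col div d, col mod d)" and j="\<lambda>p. fst p * d + snd p"])
    fix p assume p: "p \<in> {..<nb} \<times> {..<d}"
    then obtain jj k where pp: "p = (jj,k)" "jj < nb" "k < d" by auto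
    have "jj * d + k < (Suc jj) * d" using pp by simp
    also have "\<dots> \<le> nb * d" using pp by (intro mult_right_mono) auto
    finally show "fst p * d + snd p \<in> {..<nb*d}" using pp by simp
    show "((fst p * d + snd p) div d, (fst p * d + snd p) mod d) = p" using pp assms by simp
    show "g ((fst p * d + snd p) div d) ((fst p * d + snd p) mod d) = (case p of (jj, k) \<Rightarrow> g jj k)"
      using pp assms by simp
  next
    fix col assume col: "col \<in> {..<nb*d}"
    show "fst (col div d, col mod d) * d + snd (col div d, col mod d) = col" by simp
    have "col div d < nb" using col assms by (simp add: less_mult_imp_div_less)
    then show "(col div d, col mod d) \<in> {..<nb} \<times> {..<d}" using assms by simp
  qed
  finally show ?thesis by simp
qed



theorem proposition6p5:
  fixes p e q d :: nat and \<theta> :: "'k::field" and D :: "nat \<Rightarrow> nat \<Rightarrow> 'k poly"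
  assumes "prime p" and "e \<ge> 1" and "q = p ^ e"
    and "CHAR('k) = p"
    and "card {x::'k. x ^ q = x} = q"
    and "bij (\<lambda>x::'k. x ^ q)"
    and "is_tmodule \<theta> d D"
    and "t_finite q d D"
  shows "\<exists>n\<ge>1. rank_mod_sigma q d (n * d)
           (block_row q d D n (max_tau_deg q d D n)) (max_tau_deg q d D n) d"
proof -
  have qpos: "q > 0" using assms(1,3) by (simp add: prime_gt_0_nat)
  have fadd: "(x+y)^q = x^q + y^q" for x y :: 'k
    by (rule freshmans_dream'[of q e]) (use assms in auto)
  interpret skew q "frob q :: 'k \<Rightarrow> 'k"
    by unfold_locales (use qpos fadd assms(6) in auto)
  show ?thesis
  proof (cases "d = 0")
    case True
    show ?thesis
    proof (intro exI[of _ 1] conjI)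
      show "rank_mod_sigma q d (1 * d) (block_row q d D 1 (max_tau_deg q d D 1)) (max_tau_deg q d D 1) d"
        unfolding rank_mod_sigma_def using True
        by (intro exI[of _ "block_row q d D 1 (max_tau_deg q d D 1)"]) (auto simp: sdiag_form_def intro: elem_reach.refl)
    qed simp
  next
    case False
    then have d0: "0 < d" by simp
    obtain r0 :: nat and gens :: "nat \<Rightarrow> nat \<Rightarrow> 'k poly" where tf: "\<forall>m :: nat \<Rightarrow> 'k poly. \<exists>N::nat. \<exists>c :: nat \<Rightarrow> nat \<Rightarrow> 'k.
         \<forall>i<d. m i = (\<Sum>g<r0. \<Sum>j<N.
             tmul q (tmatvec q d (tmatpow q d D j) (gens g) i) [:c g j:])"
      using assms(8) unfolding t_finite_def by blast
    define G0 where "G0 = Max ({0} \<union> {degree (gens g k) | g k. g < r0 \<and> k < d})"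
    have fin1: "finite {degree (gens g k) | g k. g < r0 \<and> k < d}"
    proof -
      have "{degree (gens g k) | g k. g < r0 \<and> k < d} = (\<lambda>(g,k). degree (gens g k)) ` ({..<r0} \<times> {..<d})"
        by auto
      then show ?thesis by (metis finite_imageI finite_SigmaI finite_lessThan)
    qed
    have dg: "degree (gens g k) \<le> G0" if "g < r0" "k < d" for g k
      unfolding G0_def using fin1 that by (intro Max_ge) auto
    define L where "L = G0"
    define mm :: "nat \<Rightarrow> nat \<Rightarrow> 'k poly" where "mm = (\<lambda>a i. if i = a then monom (1::'k) (Suc L) else 0)"
    have h0: "\<forall>a. \<exists>N::nat. \<exists>c :: nat \<Rightarrow> nat \<Rightarrow> 'k. \<forall>i<d. mm a i = (\<Sum>g<r0. \<Sum>j<N.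
             tmul q (tmatvec q d (tmatpow q d D j) (gens g) i) [:c g j:])"
      using tf by blast
    have "\<exists>Nf. \<forall>a. \<exists>c :: nat \<Rightarrow> nat \<Rightarrow> 'k. \<forall>i<d. mm a i = (\<Sum>g<r0. \<Sum>j<Nf a.
             tmul q (tmatvec q d (tmatpow q d D j) (gens g) i) [:c g j:])"
      using h0 by (rule choice)
    then obtain Nf where h1: "\<forall>a. \<exists>c :: nat \<Rightarrow> nat \<Rightarrow> 'k. \<forall>i<d. mm a i = (\<Sum>g<r0. \<Sum>j<Nf a.
             tmul q (tmatvec q d (tmatpow q d D j) (gens g) i) [:c g j:])" by (elim exE)
    have "\<exists>cf. \<forall>a. \<forall>i<d. mm a i = (\<Sum>g<r0. \<Sum>j<Nf a.
             tmul q (tmatvec q d (tmatpow q d D j) (gens g) i) [:cf a g j:])"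
      using h1 by (rule choice)
    then obtain cf where ex: "\<forall>a. \<forall>i<d. mm a i = (\<Sum>g<r0. \<Sum>j<Nf a.
             tmul q (tmatvec q d (tmatpow q d D j) (gens g) i) [:cf a g j:])" by (elim exE)
    define nb where "nb = Suc (Max (Nf ` {..<d}))"
    have Nnb: "Nf a < nb" if "a < d" for a
    proof -
      have "Nf a \<le> Max (Nf ` {..<d})" using that by (intro Max_ge) auto
      then show ?thesis by (simp add: nb_def)
    qed
    define s where "s = max_tau_deg q d D nb"
    have fin2: "finite {degree (tmatpow q d D k i j) | k i j. 1 \<le> k \<and> k \<le> nb \<and> i < d \<and> j < d}"
    proof (rule finite_subset)
      show "{degree (tmatpow q d D k i j) | k i j. 1 \<le> k \<and> k \<le> nb \<and> i < d \<and> j < d}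
          \<subseteq> (\<lambda>(k,i,j). degree (tmatpow q d D k i j)) ` ({1..nb} \<times> {..<d} \<times> {..<d})"
      proof (rule subsetI)
        fix x assume "x \<in> {degree (tmatpow q d D k i j) | k i j. 1 \<le> k \<and> k \<le> nb \<and> i < d \<and> j < d}"
        then obtain k i j where kij: "x = degree (tmatpow q d D k i j)" "1 \<le> k" "k \<le> nb" "i < d" "j < d"
          by blast
        show "x \<in> (\<lambda>(k,i,j). degree (tmatpow q d D k i j)) ` ({1..nb} \<times> {..<d} \<times> {..<d})"
          by (rule image_eqI[of _ _ "(k,i,j)"]) (use kij in auto)
      qed
    qed (metis finite_imageI finite_SigmaI finite_lessThan finite_atLeastAtMost)
    have degD: "degree (tmatpow q d D k i j) \<le> s" if "1 \<le> k" "k \<le> nb" "i < d" "j < d" for k i j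
    proof -
      have "degree (tmatpow q d D k i j) \<in> {degree (tmatpow q d D k i j) | k i j. 1 \<le> k \<and> k \<le> nb \<and> i < d \<and> j < d}"
        using that by blast
      then show ?thesis unfolding s_def max_tau_deg_def using fin2 by (intro Max_ge) auto
    qed
    define H where "H = (\<lambda>a j k. if j < Nf a then (\<Sum>g<r0. tmul q (gens g k) [:cf a g j:]) else 0)"
    have dH: "degree (H a j k) \<le> L" if "k < d" for a j k
    proof -
      have "degree (tmul q (gens g k) [:cf a g j:]) \<le> L" if "g < r0" for g
        using degree_tmul[of "gens g k" "[:cf a g j:]"] dg[OF that \<open>k < d\<close>] by (simp add: L_def)
      then show ?thesis unfolding H_def by (auto intro: degree_sum_le)
    qed
    have rep: "mm a i = (\<Sum>j<Nf a. \<Sum>k<d. tmul q (tmatpow q d D j i k) (H a j k))" if "i < d" for a i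
    proof -
      have "mm a i = (\<Sum>g<r0. \<Sum>j<Nf a. \<Sum>k<d. tmul q (tmatpow q d D j i k) (tmul q (gens g k) [:cf a g j:]))"
        using ex that by (simp add: tmatvec_def tmul_sum_left tmul_assoc_const)
      also have "\<dots> = (\<Sum>j<Nf a. \<Sum>k<d. \<Sum>g<r0. tmul q (tmatpow q d D j i k) (tmul q (gens g k) [:cf a g j:]))"
        by (simp add: sum.swap[of _ "{..<r0}"])
      also have "\<dots> = (\<Sum>j<Nf a. \<Sum>k<d. tmul q (tmatpow q d D j i k) (H a j k))"
        by (intro sum.cong) (auto simp: H_def tmul_sum_right)
      finally show ?thesis .
    qed
    have s0: "s \<noteq> 0"
    proof
      assume s0: "s = 0"
      have "coeff (mm 0 0) (Suc L) = 1" by (simp add: mm_def)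
      moreover have "coeff (mm 0 0) (Suc L) = 0"
      proof -
        have "coeff (tmul q (tmatpow q d D j 0 k) (H 0 j k)) (Suc L) = 0" if "j < Nf 0" "k < d" for j k
        proof -
          have "degree (tmatpow q d D j 0 k) = 0"
          proof (cases j)
            case 0 then show ?thesis by simp
          next
            case (Suc j')
            then show ?thesis using degD[of j 0 k] Nnb[of 0] d0 that s0 by simp
          qed
          then have "degree (tmul q (tmatpow q d D j 0 k) (H 0 j k)) \<le> L"
            using degree_tmul[of "tmatpow q d D j 0 k" "H 0 j k"] dH[OF \<open>k < d\<close>, of 0 j] by simp
          then show ?thesis by (intro coeff_eq_0) simp
        qed
        then show ?thesis using rep[of 0 0] d0 by (simp add: coeff_sum)
      qed
      ultimately show False by simp
    qed
    then obtain m where sm: "s = Suc m" by (cases s) auto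
    define B' where "B' = block_row q d D nb s"
    have CCb: "CC q d (nb*d) m B'"
    proof (rule CC_basis, intro allI impI)
      fix a assume a: "a < d"
      define x where "x = (\<lambda>col. lrsh q 0 L (H a (Suc (col div d)) (col mod d)))"
      show "\<exists>x. \<forall>b<d. \<forall>n\<le>m. mv q (nb*d) B' x b n = (if n = m \<and> b = a then 1 else 0)"
      proof (intro exI[of _ x] allI impI)
        fix b n assume b: "b < d" and n: "n \<le> m"
        define X where "X = (\<lambda>j. \<Sum>k<d. lrsh q s L (tmul q (tmatpow q d D j b k) (H a j k)) n)"
        have e1: "mv q (nb*d) B' x b n = (\<Sum>jj<nb. X (Suc jj))"
        proof -
          have "mv q (nb*d) B' x b n = (\<Sum>col<nb*d. (\<lambda>jj k. M (sigma_shift q s (tmatpow q d D (Suc jj) b k))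
                  (lrsh q 0 L (H a (Suc jj) k)) n) (col div d) (col mod d))"
            by (simp add: mv_def B'_def block_row_def x_def)
          also have "\<dots> = (\<Sum>jj<nb. \<Sum>k<d. M (sigma_shift q s (tmatpow q d D (Suc jj) b k))
                  (lrsh q 0 L (H a (Suc jj) k)) n)"
            by (rule sum_divmod[OF d0])
          also have "\<dots> = (\<Sum>jj<nb. X (Suc jj))"
            unfolding X_def
          proof (intro sum.cong HOL.refl)
            fix jj k assume jj: "jj \<in> {..<nb}" and k: "k \<in> {..<d}"
            have "M (sigma_shift q s (tmatpow q d D (Suc jj) b k)) (lrsh q 0 L (H a (Suc jj) k))
                = lrsh q s L (tmul q (tmatpow q d D (Suc jj) b k) (H a (Suc jj) k))"
              by (rule key) (use degD[of "Suc jj" b k] dH[of k a "Suc jj"] jj k b in auto)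
            then show "M (sigma_shift q s (tmatpow q d D (Suc jj) b k)) (lrsh q 0 L (H a (Suc jj) k)) n
                = lrsh q s L (tmul q (tmatpow q d D (Suc jj) b k) (H a (Suc jj) k)) n" by simp
          qed
          finally show ?thesis .
        qed
        have e2: "lrsh q s L (mm a b) n = (\<Sum>j<Suc nb. X j)"
        proof -
          have "lrsh q s L (mm a b) n = (\<Sum>j<Nf a. X j)"
            unfolding rep[OF b] X_def by (simp add: lrsh_sum)
          also have "\<dots> = (\<Sum>j<Suc nb. X j)"
          proof (rule sum.mono_neutral_left)
            show "{..<Nf a} \<subseteq> {..<Suc nb}" using Nnb[OF a] by auto
            show "\<forall>j\<in>{..<Suc nb} - {..<Nf a}. X j = 0"
              by (auto simp: X_def H_def tmul_zero_right lrsh_zero)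
          qed simp
          finally show ?thesis .
        qed
        have e3: "X 0 = 0"
          unfolding X_def
        proof (rule sum.neutral, intro ballI)
          fix k assume k: "k \<in> {..<d}"
          show "lrsh q s L (tmul q (tmatpow q d D 0 b k) (H a 0 k)) n = 0"
          proof (cases "k = b")
            case True
            have "coeff (H a 0 k) (s + L - n) = 0"
              by (rule coeff_eq_0) (use dH[of k a 0] k n sm in auto)
            then show ?thesis using True by (simp add: tmul_one lrsh_def)
          next
            case False
            then show ?thesis by (simp add: tmul_zero lrsh_zero)
          qed
        qed
        have e4: "lrsh q s L (mm a b) n = (if n = m \<and> b = a then 1 else 0)"
        proof -
          have "n \<le> s + L" using n sm by simp
          moreover have "(s + L - n = Suc L) \<longleftrightarrow> n = m" using n sm by auto
          ultimately show ?thesis by (auto simp: lrsh_def mm_def)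
        qed
        have "lrsh q s L (mm a b) n = X 0 + (\<Sum>jj<nb. X (Suc jj))"
          by (simp only: e2 sum.lessThan_Suc_shift)
        then show "mv q (nb*d) B' x b n = (if n = m \<and> b = a then 1 else 0)"
          using e1 e3 e4 by simp
      qed
    qed
    have "rank_mod_sigma q d (nb*d) B' (Suc m) d" by (rule rank_result[OF CCb])
    then show ?thesis unfolding B'_def s_def using sm unfolding s_def
      by (intro exI[of _ nb]) (simp add: nb_def)
  qed
qed


end
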